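(* Let $n\ge2$ and let $\mathbb{F}$ be any field. Then $\mathrm{Der}_{\mathrm{inn}}(\mathbb{F}T_{4n})$ has dimension $3(n-1)$ over $\mathbb{F}$, and an $\mathbb{F}$-basis is $\{d_g\mid g\in\{a^i,\ a^{2i}b,\ a^{2i+1}b\mid 1\le i\le n-1\}\}$.
   Context: $T_{4n}=\langle a,b\mid a^{2n}=1,\ a^n=b^2,\ b^{-1}ab=a^{-1}\rangle$ is the dicyclic group of order $4n$; $\mathbb{F}T_{4n}$ is its group algebra. For $\beta\in\mathbb{F}T_{4n}$, the inner derivation $d_\beta$ is $d_\beta(\alpha)=\alpha\beta-\beta\alpha$; $\mathrm{Der}_{\mathrm{inn}}(\mathbb{F}T_{4n})=\{d_\beta\mid\beta\in\mathbb{F}T_{4n}\}$, an $\mathbb{F}$-vector space. *)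

theory Defs
  imports Complex_Main "HOL-Library.Function_Algebras"
begin

text \<open>Concrete model of the dicyclic group T_{4n}: the pair (i,e) with i < 2n, e < 2
  stands for the element a^i b^e.  Relations: a^{2n} = 1, b^2 = a^n, b a^j = a^{-j} b.\<close>

definition dic_carrier :: "nat \<Rightarrow> (nat \<times> nat) set" where
  "dic_carrier n = {(i, e). i < 2 * n \<and> e < 2}"

definition dic_mult :: "nat \<Rightarrow> nat \<times> nat \<Rightarrow> nat \<times> nat \<Rightarrow> nat \<times> nat" where
  "dic_mult n x y = (case x of (i, e) \<Rightarrow> case y of (j, f) \<Rightarrow>
     if e = 0 then ((i + j) mod (2 * n), f)
     else if f = 0 then ((i + 2 * n - j) mod (2 * n), 1)
     else ((i + 2 * n - j + n) mod (2 * n), 0))"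

definition dic_a :: "nat \<Rightarrow> nat \<Rightarrow> nat \<times> nat" where
  "dic_a n i = (i mod (2 * n), 0)"

definition dic_ab :: "nat \<Rightarrow> nat \<Rightarrow> nat \<times> nat" where
  "dic_ab n i = (i mod (2 * n), 1)"

definition group_alg :: "nat \<Rightarrow> ((nat \<times> nat) \<Rightarrow> 'a::field) set" where
  "group_alg n = {\<alpha>. \<forall>g. g \<notin> dic_carrier n \<longrightarrow> \<alpha> g = 0}"

definition alg_mult :: "nat \<Rightarrow> ((nat \<times> nat) \<Rightarrow> 'a::field) \<Rightarrow> ((nat \<times> nat) \<Rightarrow> 'a) \<Rightarrow> ((nat \<times> nat) \<Rightarrow> 'a)" where
  "alg_mult n \<alpha> \<beta> = (\<lambda>g. if g \<in> dic_carrier n then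
      (\<Sum>h\<in>dic_carrier n. \<Sum>k\<in>dic_carrier n. if dic_mult n h k = g then \<alpha> h * \<beta> k else 0)
    else 0)"

definition grp_elem :: "nat \<times> nat \<Rightarrow> ((nat \<times> nat) \<Rightarrow> 'a::field)" where
  "grp_elem g = (\<lambda>h. if h = g then 1 else 0)"

definition inner_der :: "nat \<Rightarrow> ((nat \<times> nat) \<Rightarrow> 'a::field) \<Rightarrow> ((nat \<times> nat) \<Rightarrow> 'a) \<Rightarrow> ((nat \<times> nat) \<Rightarrow> 'a)" where
  "inner_der n \<beta> = (\<lambda>\<alpha>. alg_mult n \<alpha> \<beta> - alg_mult n \<beta> \<alpha>)"

definition Der_inn :: "nat \<Rightarrow> (((nat \<times> nat) \<Rightarrow> 'a::field) \<Rightarrow> ((nat \<times> nat) \<Rightarrow> 'a)) set" where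
  "Der_inn n = {inner_der n \<beta> | \<beta>. \<beta> \<in> group_alg n}"

definition dscale :: "'a::field \<Rightarrow> (('b \<Rightarrow> 'a) \<Rightarrow> ('b \<Rightarrow> 'a)) \<Rightarrow> (('b \<Rightarrow> 'a) \<Rightarrow> ('b \<Rightarrow> 'a))" where
  "dscale c D = (\<lambda>\<alpha> g. c * D \<alpha> g)"

definition thm_basis :: "nat \<Rightarrow> (((nat \<times> nat) \<Rightarrow> 'a::field) \<Rightarrow> ((nat \<times> nat) \<Rightarrow> 'a)) set" where
  "thm_basis n = (\<lambda>g. inner_der n (grp_elem g)) `
     (\<Union>i\<in>{1..n-1}. {dic_a n i, dic_ab n (2*i), dic_ab n (2*i+1)})"

end

theory Submission
  imports Defs
begin


lemma sum_fun_app: "(sum f A) x = sum (\<lambda>a. f a x) A"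
  by (induction A rule: infinite_finite_induct) auto

interpretation V: vector_space "dscale :: 'a::field \<Rightarrow> (('b \<Rightarrow> 'a) \<Rightarrow> ('b \<Rightarrow> 'a)) \<Rightarrow> _"
  by unfold_locales (auto simp: dscale_def fun_eq_iff algebra_simps)

lemma modN: "0 < (n::nat) \<Longrightarrow> a < 6*n \<Longrightarrow> a mod (2*n) = (if a < 2*n then a else if a < 4*n then a - 2*n else a - 4*n)"
proof -
  assume h: "0 < n" "a < 6*n"
  show ?thesis
  proof (cases "a < 2*n")
    case True thus ?thesis by simp
  next
    case F: False
    then have "a mod (2*n) = (a - 2*n) mod (2*n)" by (simp add: le_mod_geq)
    show ?thesis
    proof (cases "a < 4*n")
      case True thus ?thesis using F \<open>a mod (2*n) = (a - 2*n) mod (2*n)\<close> by simp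
    next
      case False
      then have "(a - 2*n) mod (2*n) = (a - 4*n) mod (2*n)" by (simp add: le_mod_geq)
      thus ?thesis using F False h \<open>a mod (2*n) = (a - 2*n) mod (2*n)\<close> by simp
    qed
  qed
qed

lemma fin_G: "finite (dic_carrier n)"
proof -
  have "dic_carrier n = {..<2*n} \<times> {..<2}" by (auto simp: dic_carrier_def)
  thus ?thesis by simp
qed

lemma grp_elem_apply: "grp_elem g h = (if h = g then 1 else 0)"
  by (simp add: grp_elem_def)

lemma am_right:
  assumes "g \<in> dic_carrier n"
  shows "alg_mult n \<alpha> (grp_elem g) x = (if x \<in> dic_carrier n then
     (\<Sum>h\<in>dic_carrier n. if dic_mult n h g = x then \<alpha> h else 0) else 0)"
proof -
  have "(\<Sum>k\<in>dic_carrier n. if dic_mult n h k = x then \<alpha> h * grp_elem g k else 0)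
      = (if dic_mult n h g = x then \<alpha> h else 0)" for h
  proof -
    have "(\<Sum>k\<in>dic_carrier n. if dic_mult n h k = x then \<alpha> h * grp_elem g k else 0)
      = (\<Sum>k\<in>dic_carrier n. if k = g then (if dic_mult n h g = x then \<alpha> h else 0) else 0)"
      by (rule sum.cong) (auto simp: grp_elem_def)
    also have "\<dots> = (if dic_mult n h g = x then \<alpha> h else 0)" using assms fin_G by simp
    finally show ?thesis .
  qed
  thus ?thesis by (simp add: alg_mult_def)
qed

lemma am_left:
  assumes "g \<in> dic_carrier n"
  shows "alg_mult n (grp_elem g) \<alpha> x = (if x \<in> dic_carrier n then
     (\<Sum>h\<in>dic_carrier n. if dic_mult n g h = x then \<alpha> h else 0) else 0)"
proof -
  have "(\<Sum>h\<in>dic_carrier n. \<Sum>k\<in>dic_carrier n. if dic_mult n h k = x then grp_elem g h * \<alpha> k else 0)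
      = (\<Sum>h\<in>dic_carrier n. if h = g then (\<Sum>k\<in>dic_carrier n. if dic_mult n g k = x then \<alpha> k else 0) else 0)"
    by (rule sum.cong) (auto simp: grp_elem_apply cong: if_cong intro!: sum.cong)
  also have "\<dots> = (\<Sum>k\<in>dic_carrier n. if dic_mult n g k = x then \<alpha> k else 0)" using assms fin_G by simp
  finally show ?thesis by (simp add: alg_mult_def)
qed

lemma am_decomp_r:
  "alg_mult n \<alpha> \<beta> x = (\<Sum>g\<in>dic_carrier n. \<beta> g * alg_mult n \<alpha> (grp_elem g) x)"
proof (cases "x \<in> dic_carrier n")
  case True
  have "(\<Sum>g\<in>dic_carrier n. \<beta> g * alg_mult n \<alpha> (grp_elem g) x)
     = (\<Sum>g\<in>dic_carrier n. \<Sum>h\<in>dic_carrier n. if dic_mult n h g = x then \<alpha> h * \<beta> g else 0)"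
    using True by (auto simp: am_right sum_distrib_left intro!: sum.cong)
  also have "\<dots> = (\<Sum>h\<in>dic_carrier n. \<Sum>g\<in>dic_carrier n. if dic_mult n h g = x then \<alpha> h * \<beta> g else 0)"
    by (rule sum.swap)
  finally show ?thesis using True by (simp add: alg_mult_def)
qed (simp add: alg_mult_def am_right)

lemma am_decomp_l:
  "alg_mult n \<beta> \<alpha> x = (\<Sum>g\<in>dic_carrier n. \<beta> g * alg_mult n (grp_elem g) \<alpha> x)"
proof (cases "x \<in> dic_carrier n")
  case True
  have "(\<Sum>g\<in>dic_carrier n. \<beta> g * alg_mult n (grp_elem g) \<alpha> x)
     = (\<Sum>g\<in>dic_carrier n. \<Sum>h\<in>dic_carrier n. if dic_mult n g h = x then \<beta> g * \<alpha> h else 0)"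
    using True by (auto simp: am_left sum_distrib_left intro!: sum.cong)
  thus ?thesis using True by (simp add: alg_mult_def)
qed (simp add: alg_mult_def am_left)

lemma der_decomp:
  "inner_der n \<beta> = (\<Sum>g\<in>dic_carrier n. dscale (\<beta> g) (inner_der n (grp_elem g)))"
  by (auto simp: fun_eq_iff sum_fun_app dscale_def inner_der_def am_decomp_r[of n _ \<beta>]
      am_decomp_l[of n \<beta>] right_diff_distrib sum_subtractf)

lemma der_eval:
  assumes "g \<in> dic_carrier n" "h \<in> dic_carrier n" "x \<in> dic_carrier n"
  shows "inner_der n (grp_elem g) (grp_elem h) x =
    (if dic_mult n h g = x then 1 else 0) - (if dic_mult n g h = x then 1 else 0)"
proof -
  have 1: "(\<Sum>h'\<in>dic_carrier n. if dic_mult n h' g = x then grp_elem h h' else 0) = (if dic_mult n h g = x then 1 else 0)"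
  proof -
    have "(\<Sum>h'\<in>dic_carrier n. if dic_mult n h' g = x then grp_elem h h' else 0)
      = (\<Sum>h'\<in>dic_carrier n. if h' = h then (if dic_mult n h g = x then 1 else 0) else 0)"
      by (rule sum.cong) (auto simp: grp_elem_def)
    thus ?thesis using assms fin_G by simp
  qed
  have 2: "(\<Sum>h'\<in>dic_carrier n. if dic_mult n g h' = x then grp_elem h h' else 0) = (if dic_mult n g h = x then 1 else 0)"
  proof -
    have "(\<Sum>h'\<in>dic_carrier n. if dic_mult n g h' = x then grp_elem h h' else 0)
      = (\<Sum>h'\<in>dic_carrier n. if h' = h then (if dic_mult n g h = x then 1 else 0) else 0)"
      by (rule sum.cong) (auto simp: grp_elem_def)
    thus ?thesis using assms fin_G by simp
  qed
  have a1: "alg_mult n (grp_elem h) (grp_elem g) x = (\<Sum>h'\<in>dic_carrier n. if dic_mult n h' g = x then grp_elem h h' else 0)"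
    using am_right[OF assms(1), of "grp_elem h" x] assms(3) by simp
  have a2: "alg_mult n (grp_elem g) (grp_elem h) x = (\<Sum>h'\<in>dic_carrier n. if dic_mult n g h' = x then grp_elem h h' else 0)"
    using am_left[OF assms(1), of "grp_elem h" x] assms(3) by simp
  have "inner_der n (grp_elem g) (grp_elem h) x = alg_mult n (grp_elem h) (grp_elem g) x - alg_mult n (grp_elem g) (grp_elem h) x"
    by (simp add: inner_der_def)
  then show ?thesis by (simp only: a1 a2 1 2)
qed


definition dl :: "nat \<Rightarrow> nat \<times> nat \<Rightarrow> nat \<times> nat \<Rightarrow> nat \<times> nat" where
  "dl n h x = (case h of (k, e) \<Rightarrow> case x of (m, f) \<Rightarrow>
     if e = 0 then ((m + 2*n - k) mod (2*n), f)
     else if f = 1 then ((k + 2*n - m) mod (2*n), 0)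
     else ((k + 3*n - m) mod (2*n), 1))"

definition dr :: "nat \<Rightarrow> nat \<times> nat \<Rightarrow> nat \<times> nat \<Rightarrow> nat \<times> nat" where
  "dr n h x = (case h of (k, e) \<Rightarrow> case x of (m, f) \<Rightarrow>
     if e = 0 then (if f = 0 then ((m + 2*n - k) mod (2*n), 0) else ((m + k) mod (2*n), 1))
     else if f = 1 then ((m + 2*n - k) mod (2*n), 0)
     else ((m + k + n) mod (2*n), 1))"

lemma two_cases: "(e::nat) < 2 \<Longrightarrow> e = 0 \<or> e = 1" by auto


lemma LL0:
  assumes  "k < 2*n" "m < 2*n" "j < 2*n" "0 < n"
  shows "e = 0 \<or> e = 1 \<Longrightarrow> f = 0 \<or> f = 1 \<Longrightarrow> d = 0 \<or> d = 1 \<Longrightarrow> (dic_mult n (k,e) (j,d) = (m,f)) = ((j,d) = dl n (k,e) (m,f))"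
  using assms unfolding dic_mult_def dl_def
    apply (elim disjE) apply (simp_all add: modN) apply safe apply linarith+
  done

lemma RR0:
  assumes  "k < 2*n" "m < 2*n" "j < 2*n" "0 < n"
  shows "e = 0 \<or> e = 1 \<Longrightarrow> f = 0 \<or> f = 1 \<Longrightarrow> d = 0 \<or> d = 1 \<Longrightarrow> (dic_mult n (j,d) (k,e) = (m,f)) = ((j,d) = dr n (k,e) (m,f))"
  using assms unfolding dic_mult_def dr_def
    apply (elim disjE) apply (simp_all add: modN) apply safe apply linarith+
  done

lemma carrier_cases:
  assumes "g \<in> dic_carrier n"
  obtains j d where "g = (j, d)" "j < 2*n" "d = 0 \<or> d = 1" "0 < n"
proof -
  obtain j d where g: "g = (j, d)" by fastforce
  with assms have "j < 2*n" "d < 2" by (auto simp: dic_carrier_def)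
  then have "d = 0 \<or> d = 1" "0 < n" by auto
  with g \<open>j < 2*n\<close> show thesis using that by blast
qed

lemma LL:
  assumes "h \<in> dic_carrier n" "x \<in> dic_carrier n" "g \<in> dic_carrier n"
  shows "(dic_mult n h g = x) = (g = dl n h x)"
  using assms by (elim carrier_cases) (simp add: LL0)

lemma RR:
  assumes "h \<in> dic_carrier n" "x \<in> dic_carrier n" "g \<in> dic_carrier n"
  shows "(dic_mult n g h = x) = (g = dr n h x)"
  using assms by (elim carrier_cases) (simp add: RR0)


lemma class_zero:
  assumes C: "C \<subseteq> dic_carrier n"
    and inv: "\<And>h x. h \<in> dic_carrier n \<Longrightarrow> x \<in> dic_carrier n \<Longrightarrow> (dl n h x \<in> C) = (dr n h x \<in> C)"
  shows "(\<Sum>g\<in>C. inner_der n (grp_elem g)) = (0 :: ((nat\<times>nat \<Rightarrow> 'a::field) \<Rightarrow> _))"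
proof (rule ext, rule ext)
  fix \<alpha> :: "nat\<times>nat \<Rightarrow> 'a" and x
  have fC: "finite C" using C fin_G finite_subset by blast
  show "(\<Sum>g\<in>C. inner_der n (grp_elem g)) \<alpha> x = (0 :: ((nat\<times>nat \<Rightarrow> 'a::field) \<Rightarrow> _)) \<alpha> x"
  proof (cases "x \<in> dic_carrier n")
    case False
    thus ?thesis by (simp add: sum_fun_app inner_der_def alg_mult_def)
  next
    case True
    let ?G = "dic_carrier n"
    have "(\<Sum>g\<in>C. inner_der n (grp_elem g)) \<alpha> x
      = (\<Sum>g\<in>C. (\<Sum>h\<in>?G. if dic_mult n h g = x then \<alpha> h else 0) - (\<Sum>h\<in>?G. if dic_mult n g h = x then \<alpha> h else 0))"
      unfolding sum_fun_app
    proof (rule sum.cong[OF refl])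
      fix g assume "g \<in> C"
      then have g: "g \<in> ?G" using C by blast
      show "inner_der n (grp_elem g) \<alpha> x = (\<Sum>h\<in>?G. if dic_mult n h g = x then \<alpha> h else 0) - (\<Sum>h\<in>?G. if dic_mult n g h = x then \<alpha> h else 0)"
        using am_right[OF g, of \<alpha> x] am_left[OF g, of \<alpha> x] True by (simp add: inner_der_def)
    qed
    also have "\<dots> = (\<Sum>g\<in>C. \<Sum>h\<in>?G. if dic_mult n h g = x then \<alpha> h else 0) - (\<Sum>g\<in>C. \<Sum>h\<in>?G. if dic_mult n g h = x then \<alpha> h else 0)"
      by (simp add: sum_subtractf)
    also have "\<dots> = (\<Sum>h\<in>?G. \<Sum>g\<in>C. if dic_mult n h g = x then \<alpha> h else 0) - (\<Sum>h\<in>?G. \<Sum>g\<in>C. if dic_mult n g h = x then \<alpha> h else 0)"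
      by (simp add: sum.swap[of _ C])
    also have "\<dots> = (\<Sum>h\<in>?G. if dl n h x \<in> C then \<alpha> h else 0) - (\<Sum>h\<in>?G. if dr n h x \<in> C then \<alpha> h else 0)"
    proof -
      have 1: "(\<Sum>g\<in>C. if dic_mult n h g = x then \<alpha> h else 0) = (if dl n h x \<in> C then \<alpha> h else 0)" if h: "h \<in> ?G" for h
      proof -
        have "(\<Sum>g\<in>C. if dic_mult n h g = x then \<alpha> h else 0) = (\<Sum>g\<in>C. if g = dl n h x then \<alpha> h else 0)"
        proof (rule sum.cong[OF refl])
          fix g assume "g \<in> C"
          then have "g \<in> ?G" using C by blast
          show "(if dic_mult n h g = x then \<alpha> h else 0) = (if g = dl n h x then \<alpha> h else 0)"
            using LL[OF h True \<open>g \<in> ?G\<close>] by simp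
        qed
        thus ?thesis using fC by (simp add: sum.delta')
      qed
      have 2: "(\<Sum>g\<in>C. if dic_mult n g h = x then \<alpha> h else 0) = (if dr n h x \<in> C then \<alpha> h else 0)" if h: "h \<in> ?G" for h
      proof -
        have "(\<Sum>g\<in>C. if dic_mult n g h = x then \<alpha> h else 0) = (\<Sum>g\<in>C. if g = dr n h x then \<alpha> h else 0)"
        proof (rule sum.cong[OF refl])
          fix g assume "g \<in> C"
          then have "g \<in> ?G" using C by blast
          show "(if dic_mult n g h = x then \<alpha> h else 0) = (if g = dr n h x then \<alpha> h else 0)"
            using RR[OF h True \<open>g \<in> ?G\<close>] by simp
        qed
        thus ?thesis using fC by (simp add: sum.delta')
      qed
      show ?thesis using 1 2 by (simp cong: sum.cong)
    qed
    also have "\<dots> = 0" using inv True by (simp cong: sum.cong)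
    finally show ?thesis by simp
  qed
qed

definition Cp :: "nat \<Rightarrow> nat \<Rightarrow> (nat \<times> nat) set" where
  "Cp n p = {g. snd g = 1 \<and> fst g < 2*n \<and> fst g mod 2 = p}"

definition Pj :: "nat \<Rightarrow> nat \<Rightarrow> (nat \<times> nat) set" where
  "Pj n j = {(j, 0), ((2*n - j) mod (2*n), 0)}"


lemma mm: "(a mod (2*n)) mod 2 = a mod (2::nat)"
  by (simp add: mod_mod_cancel)
lemma f2: "(X + 2*(t::nat)) mod 2 = X mod 2" by simp

lemma p1: "j < 2*n \<Longrightarrow> (a + 2*n - j) mod 2 = (a + j) mod (2::nat)"
proof -
  assume "j < 2*n"
  then have e: "a + 2*n - j + 2*j = (a + j) + 2*n" by simp
  have "(a + 2*n - j) mod 2 = (a + 2*n - j + 2*j) mod 2" by (rule f2[symmetric])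
  also have "\<dots> = ((a + j) + 2*n) mod 2" by (simp only: e)
  also have "\<dots> = (a + j) mod 2" by (rule f2)
  finally show ?thesis .
qed
lemma p2: "ja < 2*n \<Longrightarrow> (j + 3*n - ja) mod 2 = (ja + j + n) mod (2::nat)"
proof -
  assume "ja < 2*n"
  then have e: "j + 3*n - ja + 2*ja = (ja + j + n) + 2*n" by simp
  have "(j + 3*n - ja) mod 2 = (j + 3*n - ja + 2*ja) mod 2" by (rule f2[symmetric])
  also have "\<dots> = ((ja + j + n) + 2*n) mod 2" by (simp only: e)
  also have "\<dots> = (ja + j + n) mod 2" by (rule f2)
  finally show ?thesis .
qed

lemma Cp_inv:
  assumes "h \<in> dic_carrier n" "x \<in> dic_carrier n"
  shows "(dl n h x \<in> Cp n p) = (dr n h x \<in> Cp n p)"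
  using assms
  apply (elim carrier_cases)
  apply (simp add: Cp_def dl_def dr_def)
  apply (elim disjE)
  apply (simp_all add: mm p1 p2)
  done

lemma Pj_inv:
  assumes "h \<in> dic_carrier n" "x \<in> dic_carrier n" "j < 2*n"
  shows "(dl n h x \<in> Pj n j) = (dr n h x \<in> Pj n j)"
  using assms
  apply (elim carrier_cases)
  apply (simp add: Pj_def dl_def dr_def)
  apply (elim disjE)
  apply (simp_all add: modN)
  apply safe
  apply linarith+
  done


definition S :: "nat \<Rightarrow> (nat \<times> nat) set" where
  "S n = {g. (snd g = 0 \<and> 1 \<le> fst g \<and> fst g < n) \<or> (snd g = 1 \<and> 2 \<le> fst g \<and> fst g < 2*n)}"

lemma S_sub: "S n \<subseteq> dic_carrier n"
  by (auto simp: S_def dic_carrier_def)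

lemma idx_eq:
  assumes "n \<ge> 2"
  shows "(\<Union>i\<in>{1..n-1}. {dic_a n i, dic_ab n (2*i), dic_ab n (2*i+1)}) = S n"
proof
  show "(\<Union>i\<in>{1..n-1}. {dic_a n i, dic_ab n (2*i), dic_ab n (2*i+1)}) \<subseteq> S n"
    using assms by (auto simp: S_def dic_a_def dic_ab_def)
next
  show "S n \<subseteq> (\<Union>i\<in>{1..n-1}. {dic_a n i, dic_ab n (2*i), dic_ab n (2*i+1)})"
  proof
    fix g assume g: "g \<in> S n"
    obtain j e where ge: "g = (j, e)" by fastforce
    show "g \<in> (\<Union>i\<in>{1..n-1}. {dic_a n i, dic_ab n (2*i), dic_ab n (2*i+1)})"
    proof (cases "e = 0")
      case True
      then have "j \<ge> 1" "j < n" using g ge by (auto simp: S_def)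
      then have "g = dic_a n j" using ge True by (simp add: dic_a_def)
      thus ?thesis using \<open>j \<ge> 1\<close> \<open>j < n\<close> by auto
    next
      case False
      then have e1: "e = 1" "2 \<le> j" "j < 2*n" using g ge by (auto simp: S_def)
      define i where "i = j div 2"
      have i: "1 \<le> i" "i \<le> n - 1" "j = 2*i \<or> j = 2*i+1" using e1 unfolding i_def by auto
      have "g = dic_ab n (2*i) \<or> g = dic_ab n (2*i+1)"
        using i e1 ge by (auto simp: dic_ab_def)
      thus ?thesis using i by auto
    qed
  qed
qed

lemma thm_basis_eq: assumes "n \<ge> 2" shows "thm_basis n = (\<lambda>g. inner_der n (grp_elem g)) ` S n"
  unfolding thm_basis_def by (simp only: idx_eq[OF assms])

lemma mult_closed: "g \<in> dic_carrier n \<Longrightarrow> h \<in> dic_carrier n \<Longrightarrow> dic_mult n g h \<in> dic_carrier n"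
  by (auto simp: dic_carrier_def dic_mult_def split: prod.splits)

lemma witness:
  assumes n: "n \<ge> 2" and g0: "g0 \<in> S n"
  shows "\<exists>h x. h \<in> dic_carrier n \<and> x \<in> dic_carrier n \<and>
     (\<forall>g\<in>S n. (dic_mult n h g = x) = (g = g0) \<and> dic_mult n g h \<noteq> x)"
proof -
  have key: "\<exists>h. h \<in> dic_carrier n \<and> dr n h (dic_mult n h g0) \<notin> S n"
  proof -
    obtain j e where ge: "g0 = (j, e)" by fastforce
    show ?thesis
    proof (cases "e = 0")
      case True
      then have j: "1 \<le> j" "j < n" using g0 ge by (auto simp: S_def)
      have "dic_mult n (0,1) g0 = (2*n - j, 1)" using ge True j by (simp add: dic_mult_def modN)
      moreover have "dr n (0,1) (2*n - j, 1) = (2*n - j, 0)" using j by (simp add: dr_def modN)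
      moreover have "(2*n - j, 0) \<notin> S n" using j by (simp add: S_def; linarith)
      moreover have "(0::nat,1::nat) \<in> dic_carrier n" using n by (simp add: dic_carrier_def)
      ultimately show ?thesis by metis
    next
      case False
      then have e1: "e = 1" "2 \<le> j" "j < 2*n" using g0 ge by (auto simp: S_def)
      define i where "i = j div 2"
      have i: "1 \<le> i" "i < n" "2*i \<le> j" "j \<le> 2*i+1" using e1 unfolding i_def by auto
      have "dic_mult n (2*n - i, 0) g0 = (j - i, 1)" using ge e1 i by (simp add: dic_mult_def modN)
      moreover have "dr n (2*n - i, 0) (j - i, 1) = (j - 2*i, 1)" using i e1 by (simp add: dr_def modN)
      moreover have "(j - 2*i, 1) \<notin> S n" using i by (simp add: S_def)
      moreover have "(2*n - i, 0) \<in> dic_carrier n" using i by (simp add: dic_carrier_def)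
      ultimately show ?thesis by metis
    qed
  qed
  then obtain h where h: "h \<in> dic_carrier n" "dr n h (dic_mult n h g0) \<notin> S n" by blast
  have g0G: "g0 \<in> dic_carrier n" using g0 S_sub by blast
  let ?x = "dic_mult n h g0"
  have x: "?x \<in> dic_carrier n" using mult_closed[OF h(1) g0G] .
  have "\<forall>g\<in>S n. (dic_mult n h g = ?x) = (g = g0) \<and> dic_mult n g h \<noteq> ?x"
  proof
    fix g assume g: "g \<in> S n"
    then have gG: "g \<in> dic_carrier n" using S_sub by blast
    have "dl n h ?x = g0" using LL[OF h(1) x g0G] by simp
    then have 1: "(dic_mult n h g = ?x) = (g = g0)" using LL[OF h(1) x gG] by simp
    have 2: "dic_mult n g h \<noteq> ?x" using RR[OF h(1) x gG] h(2) g by auto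
    show "(dic_mult n h g = ?x) = (g = g0) \<and> dic_mult n g h \<noteq> ?x" using 1 2 by simp
  qed
  thus ?thesis using h(1) x by blast
qed


lemma card_S:
  assumes n: "n \<ge> 2"
  shows "card (S n) = 3 * (n - 1)"
proof -
  have "S n = (\<lambda>j. (j, 0)) ` {1..<n} \<union> (\<lambda>j. (j, 1)) ` {2..<2*n}"
    by (auto simp: S_def image_iff)
  moreover have "card ((\<lambda>j. (j, 0::nat)) ` {1..<n}) = n - 1"
    by (simp add: card_image inj_on_def)
  moreover have "card ((\<lambda>j. (j, 1::nat)) ` {2..<2*n}) = 2*n - 2"
    by (simp add: card_image inj_on_def)
  moreover have "(\<lambda>j. (j, 0::nat)) ` {1..<n} \<inter> (\<lambda>j. (j, 1)) ` {2..<2*n} = {}" by auto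
  ultimately show ?thesis using n by (simp add: card_Un_disjoint)
qed


lemma eval_S:
  assumes h: "h \<in> dic_carrier n" and x: "x \<in> dic_carrier n"
    and w: "\<forall>g\<in>S n. (dic_mult n h g = x) = (g = g0) \<and> dic_mult n g h \<noteq> x"
    and g: "g \<in> S n"
  shows "inner_der n (grp_elem g :: nat\<times>nat \<Rightarrow> 'a::field) (grp_elem h) x = (if g = g0 then 1 else 0)"
proof -
  have gG: "g \<in> dic_carrier n" using g S_sub by blast
  from w g have a: "(dic_mult n h g = x) = (g = g0)" and b: "dic_mult n g h \<noteq> x" by auto
  show ?thesis unfolding der_eval[OF gG h x] using a b by simp
qed

lemma inj_D:
  assumes n: "n \<ge> 2"
  shows "inj_on (\<lambda>g. inner_der n (grp_elem g :: nat\<times>nat \<Rightarrow> 'a::field)) (S n)"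
proof
  fix g g' assume g: "g \<in> S n" and g': "g' \<in> S n"
    and eq: "inner_der n (grp_elem g :: nat\<times>nat \<Rightarrow> 'a::field) = inner_der n (grp_elem g')"
  obtain h x where hx: "h \<in> dic_carrier n" "x \<in> dic_carrier n"
    "\<forall>g1\<in>S n. (dic_mult n h g1 = x) = (g1 = g) \<and> dic_mult n g1 h \<noteq> x"
    using witness[OF n g] by blast
  have e1: "inner_der n (grp_elem g :: nat\<times>nat \<Rightarrow> 'a::field) (grp_elem h) x = 1"
    using eval_S[OF hx g] by simp
  have e2: "inner_der n (grp_elem g' :: nat\<times>nat \<Rightarrow> 'a::field) (grp_elem h) x = (if g' = g then 1 else 0)"
    using eval_S[OF hx g'] .
  have "(if g' = g then 1 else (0::'a)) = 1" using e1 e2 eq by simp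
  then show "g = g'" by (cases "g' = g") auto
qed

lemma card_basis:
  assumes n: "n \<ge> 2"
  shows "card (thm_basis n :: (((nat \<times> nat) \<Rightarrow> 'a::field) \<Rightarrow> _) set) = 3 * (n - 1)"
proof -
  have "thm_basis n = ((\<lambda>g. inner_der n (grp_elem g)) ` S n :: (((nat \<times> nat) \<Rightarrow> 'a::field) \<Rightarrow> _) set)"
    by (rule thm_basis_eq[OF n])
  thus ?thesis using card_image[OF inj_D[OF n]] card_S[OF n] by simp
qed


lemma indep:
  assumes n: "n \<ge> 2"
  shows "\<not> V.dependent (thm_basis n :: (((nat \<times> nat) \<Rightarrow> 'a::field) \<Rightarrow> _) set)"
proof
  assume "V.dependent (thm_basis n :: (((nat \<times> nat) \<Rightarrow> 'a::field) \<Rightarrow> _) set)"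
  then obtain t u v0 where t: "finite t" "t \<subseteq> (thm_basis n :: (((nat \<times> nat) \<Rightarrow> 'a::field) \<Rightarrow> _) set)"
    "(\<Sum>v\<in>t. dscale (u v) v) = 0" and v0: "v0 \<in> t" "u v0 \<noteq> 0"
    unfolding V.dependent_explicit by blast
  have "v0 \<in> thm_basis n" using t v0 by blast
  then obtain g0 where g0: "g0 \<in> S n" "v0 = inner_der n (grp_elem g0)"
    using thm_basis_eq[OF n] by blast
  obtain h x where hx: "h \<in> dic_carrier n" "x \<in> dic_carrier n"
    "\<forall>g1\<in>S n. (dic_mult n h g1 = x) = (g1 = g0) \<and> dic_mult n g1 h \<noteq> x"
    using witness[OF n g0(1)] by blast
  have v0ev: "v0 (grp_elem h) x = 1" using eval_S[OF hx g0(1)] g0(2) by simp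
  have ev: "v (grp_elem h) x = (if v = v0 then 1 else 0)" if v: "v \<in> t" for v
  proof -
    have "v \<in> thm_basis n" using t v by blast
    then obtain g where g: "g \<in> S n" "v = inner_der n (grp_elem g)"
      using thm_basis_eq[OF n] by blast
    have e: "v (grp_elem h) x = (if g = g0 then 1 else 0)" using eval_S[OF hx g(1)] g(2) by simp
    show ?thesis
    proof (cases "g = g0")
      case True thus ?thesis using e g g0 by simp
    next
      case False
      then have "v \<noteq> v0" using e v0ev by auto
      thus ?thesis using e False by simp
    qed
  qed
  have "0 = (\<Sum>v\<in>t. dscale (u v) v) (grp_elem h) x" using t(3) by simp
  also have "\<dots> = (\<Sum>v\<in>t. u v * v (grp_elem h) x)" by (simp add: sum_fun_app dscale_def)
  also have "\<dots> = (\<Sum>v\<in>t. if v = v0 then u v else 0)" by (rule sum.cong[OF refl]) (simp add: ev)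
  also have "\<dots> = u v0" using t(1) v0(1) by simp
  finally show False using v0(2) by simp
qed


lemma Pj_sub: "j < 2*n \<Longrightarrow> Pj n j \<subseteq> dic_carrier n"
  by (auto simp: Pj_def dic_carrier_def)

lemma Pj_sum: "j < 2*n \<Longrightarrow> (\<Sum>g\<in>Pj n j. inner_der n (grp_elem g)) = (0 :: ((nat\<times>nat \<Rightarrow> 'a::field) \<Rightarrow> _))"
  by (rule class_zero[OF Pj_sub]) (simp_all add: Pj_inv)

lemma Cp_sub: "Cp n p \<subseteq> dic_carrier n"
  by (auto simp: Cp_def dic_carrier_def)

lemma Cp_sum: "(\<Sum>g\<in>Cp n p. inner_der n (grp_elem g)) = (0 :: ((nat\<times>nat \<Rightarrow> 'a::field) \<Rightarrow> _))"
  by (rule class_zero[OF Cp_sub]) (simp_all add: Cp_inv)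

lemma D_span:
  assumes n: "n \<ge> 2" and g: "g \<in> dic_carrier n"
  shows "inner_der n (grp_elem g :: nat\<times>nat \<Rightarrow> 'a::field) \<in> V.span (thm_basis n)"
proof -
  let ?D = "\<lambda>g. inner_der n (grp_elem g :: nat\<times>nat \<Rightarrow> 'a::field)"
  have TB: "thm_basis n = (?D ` S n)" by (rule thm_basis_eq[OF n])
  have base: "?D g' \<in> V.span (thm_basis n)" if "g' \<in> S n" for g'
    using that TB by (intro V.span_base) auto
  obtain j d where gd: "g = (j, d)" "j < 2*n" "d = 0 \<or> d = 1" using g by (elim carrier_cases) blast
  show ?thesis
  proof (cases "d = 0")
    case d0: True
    show ?thesis
    proof (cases "j = 0 \<or> j = n")
      case True
      then have "Pj n j = {g}" using gd d0 n by (auto simp: Pj_def)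
      then have "?D g = 0" using Pj_sum[OF gd(2), where 'a='a] by simp
      thus ?thesis by (simp add: V.span_zero)
    next
      case False
      show ?thesis
      proof (cases "j < n")
        case True
        then have "g \<in> S n" using False gd d0 by (auto simp: S_def)
        thus ?thesis by (rule base)
      next
        case jn: False
        then have j2: "(2*n - j) mod (2*n) = 2*n - j" "2*n - j \<noteq> j" using False gd by auto
        then have P: "Pj n j = {g, (2*n - j, 0)}" "g \<noteq> (2*n - j, 0)" using gd d0 by (auto simp: Pj_def)
        have "?D g + ?D (2*n - j, 0) = 0" using Pj_sum[OF gd(2), where 'a='a] P by simp
        then have "?D g = - ?D (2*n - j, 0)" by (simp add: eq_neg_iff_add_eq_0)
        moreover have "(2*n - j, 0) \<in> S n" using jn False gd by (auto simp: S_def)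
        ultimately show ?thesis using base V.span_neg by metis
      qed
    qed
  next
    case d1: False
    then have d: "d = 1" using gd by simp
    show ?thesis
    proof (cases "j < 2")
      case False
      then have "g \<in> S n" using gd d by (auto simp: S_def)
      thus ?thesis by (rule base)
    next
      case True
      let ?R = "Cp n j - {g}"
      have gC: "g \<in> Cp n j" using True gd d by (auto simp: Cp_def)
      have fin: "finite (Cp n j)" using Cp_sub fin_G finite_subset by blast
      have "Cp n j = insert g ?R" using gC by blast
      then have "(\<Sum>g'\<in>Cp n j. ?D g') = ?D g + (\<Sum>g'\<in>?R. ?D g')"
        using fin by (metis sum.insert finite_Diff Diff_iff insertI1)
      then have "?D g + (\<Sum>g'\<in>?R. ?D g') = 0" using Cp_sum[of n j, where 'a='a] by simp
      then have eq: "?D g = - (\<Sum>g'\<in>?R. ?D g')" by (simp add: eq_neg_iff_add_eq_0)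
      have RS: "?R \<subseteq> S n"
      proof
        fix g' assume g': "g' \<in> ?R"
        obtain a b where ab: "g' = (a, b)" by fastforce
        have "b = 1" "a < 2*n" "a mod 2 = j" "(a, b) \<noteq> (j, 1)" using g' ab gd d by (auto simp: Cp_def)
        then have "2 \<le> a" using True by (metis Pair_inject mod_less not_le)
        thus "g' \<in> S n" using ab \<open>b = 1\<close> \<open>a < 2*n\<close> by (simp add: S_def)
      qed
      have "(\<Sum>g'\<in>?R. ?D g') \<in> V.span (thm_basis n)"
        using RS base by (intro V.span_sum) auto
      thus ?thesis using eq V.span_neg by metis
    qed
  qed
qed


lemma der_add: "inner_der n (\<beta>1 + \<beta>2) = inner_der n \<beta>1 + (inner_der n \<beta>2 :: (nat\<times>nat \<Rightarrow> 'a::field) \<Rightarrow> _)"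
  by (simp add: der_decomp[of n "\<beta>1 + \<beta>2"] der_decomp[of n \<beta>1] der_decomp[of n \<beta>2]
      V.scale_left_distrib sum.distrib)

lemma der_scale: "inner_der n (\<lambda>g. c * \<beta> g) = dscale c (inner_der n \<beta> :: (nat\<times>nat \<Rightarrow> 'a::field) \<Rightarrow> _)"
  by (simp add: der_decomp[of n "\<lambda>g. c * \<beta> g"] der_decomp[of n \<beta>] V.scale_sum_right V.scale_scale)

lemma der_zero: "inner_der n (\<lambda>g. 0) = (0 :: (nat\<times>nat \<Rightarrow> 'a::field) \<Rightarrow> _)"
  by (simp add: der_decomp[of n "\<lambda>g. 0"])

lemma subspace_Der: "V.subspace (Der_inn n :: (((nat \<times> nat) \<Rightarrow> 'a::field) \<Rightarrow> _) set)"
  unfolding V.subspace_def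
proof (intro conjI ballI allI)
  show "0 \<in> (Der_inn n :: (((nat \<times> nat) \<Rightarrow> 'a::field) \<Rightarrow> _) set)"
    unfolding Der_inn_def using der_zero[of n, where 'a='a]
    by (auto simp: group_alg_def intro!: exI[of _ "\<lambda>g. 0"])
next
  fix x y :: "((nat \<times> nat) \<Rightarrow> 'a) \<Rightarrow> (nat \<times> nat) \<Rightarrow> 'a" assume "x \<in> (Der_inn n :: (((nat \<times> nat) \<Rightarrow> 'a::field) \<Rightarrow> _) set)" "y \<in> Der_inn n"
  then obtain b1 b2 where "x = inner_der n b1" "b1 \<in> group_alg n" "y = inner_der n b2" "b2 \<in> group_alg n"
    unfolding Der_inn_def by blast
  then show "x + y \<in> Der_inn n" unfolding Der_inn_def
    by (auto simp: group_alg_def der_add[symmetric] intro!: exI[of _ "b1 + b2"])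
next
  fix c :: 'a and x :: "((nat \<times> nat) \<Rightarrow> 'a) \<Rightarrow> (nat \<times> nat) \<Rightarrow> 'a" assume "x \<in> (Der_inn n :: (((nat \<times> nat) \<Rightarrow> 'a::field) \<Rightarrow> _) set)"
  then obtain b where "x = inner_der n b" "b \<in> group_alg n"
    unfolding Der_inn_def by blast
  then show "dscale c x \<in> Der_inn n" unfolding Der_inn_def
    by (auto simp: group_alg_def der_scale[symmetric] intro!: exI[of _ "\<lambda>g. c * b g"])
qed

lemma basis_sub: assumes n: "n \<ge> 2"
  shows "thm_basis n \<subseteq> (Der_inn n :: (((nat \<times> nat) \<Rightarrow> 'a::field) \<Rightarrow> _) set)"
proof
  fix v assume "v \<in> (thm_basis n :: (((nat \<times> nat) \<Rightarrow> 'a::field) \<Rightarrow> _) set)"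
  then obtain g where g: "g \<in> S n" "v = inner_der n (grp_elem g)" using thm_basis_eq[OF n] by blast
  have "g \<in> dic_carrier n" using g S_sub by blast
  then have "grp_elem g \<in> (group_alg n :: (nat\<times>nat \<Rightarrow> 'a) set)" by (auto simp: group_alg_def grp_elem_def)
  thus "v \<in> Der_inn n" using g unfolding Der_inn_def by blast
qed

lemma Der_sub: assumes n: "n \<ge> 2"
  shows "(Der_inn n :: (((nat \<times> nat) \<Rightarrow> 'a::field) \<Rightarrow> _) set) \<subseteq> V.span (thm_basis n)"
proof
  fix v assume "v \<in> (Der_inn n :: (((nat \<times> nat) \<Rightarrow> 'a::field) \<Rightarrow> _) set)"
  then obtain b where v: "v = inner_der n b" unfolding Der_inn_def by blast
  show "v \<in> V.span (thm_basis n)"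
    unfolding v der_decomp[of n b]
    by (intro V.span_sum V.span_scale D_span[OF n])
qed

theorem theorem4p5:
  fixes n :: nat
  assumes "n \<ge> 2"
  shows "vector_space.dim dscale (Der_inn n :: (((nat \<times> nat) \<Rightarrow> 'a::field) \<Rightarrow> _) set) = 3 * (n - 1)
    \<and> thm_basis n \<subseteq> (Der_inn n :: (((nat \<times> nat) \<Rightarrow> 'a::field) \<Rightarrow> _) set)
    \<and> \<not> module.dependent dscale (thm_basis n :: (((nat \<times> nat) \<Rightarrow> 'a::field) \<Rightarrow> _) set)
    \<and> module.span dscale (thm_basis n) = (Der_inn n :: (((nat \<times> nat) \<Rightarrow> 'a::field) \<Rightarrow> _) set)
    \<and> card (thm_basis n :: (((nat \<times> nat) \<Rightarrow> 'a::field) \<Rightarrow> _) set) = 3 * (n - 1)"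
proof -
  have sp: "V.span (thm_basis n) = (Der_inn n :: (((nat \<times> nat) \<Rightarrow> 'a::field) \<Rightarrow> _) set)"
    by (rule V.span_subspace[OF basis_sub[OF assms] Der_sub[OF assms] subspace_Der])
  have ind: "\<not> V.dependent (thm_basis n :: (((nat \<times> nat) \<Rightarrow> 'a::field) \<Rightarrow> _) set)"
    by (rule indep[OF assms])
  have cd: "card (thm_basis n :: (((nat \<times> nat) \<Rightarrow> 'a::field) \<Rightarrow> _) set) = 3 * (n - 1)"
    by (rule card_basis[OF assms])
  have "V.dim (Der_inn n :: (((nat \<times> nat) \<Rightarrow> 'a::field) \<Rightarrow> _) set) = 3 * (n - 1)"
    using V.dim_span_eq_card_independent[OF ind] sp cd by simp
  thus ?thesis using sp ind cd basis_sub[OF assms] by simp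
qed


end
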